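(* Let $X$ be a topological space and $f\colon X\to X$ a homeomorphism such that the $\mathbb Z$-action $n\cdot x=f^n(x)$ is cocompactly expansive. Then for every integer $n\neq 0$, the homeomorphism $f^n$ (i.e. the $\mathbb Z$-action $m\cdot x=f^{nm}(x)$) is cocompactly expansive.
   Context: For a family $\mathcal U$ of subsets of $X$ and $A\subseteq X$, write $A\prec\mathcal U$ if $A\subseteq U$ for some $U\in\mathcal U$. An action of a group $G$ on $X$ is cocompactly expansive if there exist a finite open cover $\mathcal U$ of $X$ and a compact set $K\subseteq X$ such that (1) $G\cdot K=X$, and (2) whenever $x,y\in X$ satisfy $\{g\cdot x,g\cdot y\}\prec\mathcal U\cup\{X\setminus K\}$ for every $g\in G$, then $x=y$. *)

theory Defs
  imports "HOL-Analysis.Analysis"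
begin

definition subord :: "'a set \<Rightarrow> 'a set set \<Rightarrow> bool" where
  "subord A \<U> \<longleftrightarrow> (\<exists>U\<in>\<U>. A \<subseteq> U)"

definition cocompactly_expansive :: "'g set \<Rightarrow> ('g \<Rightarrow> 'a::topological_space \<Rightarrow> 'a) \<Rightarrow> bool" where
  "cocompactly_expansive G act \<longleftrightarrow>
     (\<exists>\<U> K. finite \<U> \<and> (\<forall>U\<in>\<U>. open U) \<and> \<Union>\<U> = UNIV \<and> compact K \<and>
        (\<Union>g\<in>G. act g ` K) = UNIV \<and>
        (\<forall>x y. (\<forall>g\<in>G. subord {act g x, act g y} (\<U> \<union> {UNIV - K})) \<longrightarrow> x = y))"

definition zpow :: "('a \<Rightarrow> 'a) \<Rightarrow> ('a \<Rightarrow> 'a) \<Rightarrow> int \<Rightarrow> 'a \<Rightarrow> 'a" where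
  "zpow f g n = (if 0 \<le> n then f ^^ nat n else g ^^ nat (- n))"

end

theory Submission
  imports Defs
begin

locale zp =
  fixes f g :: "'a::topological_space \<Rightarrow> 'a"
  assumes fg: "\<And>x. f (g x) = x" and gf: "\<And>x. g (f x) = x"
begin

lemma zsuc1: "zpow f g (a + 1) x = f (zpow f g a x)"
proof (cases "0 \<le> a")
  case True
  then have "nat (a+1) = Suc (nat a)" by simp
  then show ?thesis using True by (simp add: zpow_def)
next
  case False
  define j where "j = nat (- a - 1)"
  have j: "a = - int (Suc j)" using False by (simp add: j_def)
  have "nat (- a) = Suc j" using j by simp
  then have z1: "zpow f g a = g ^^ Suc j" using j unfolding zpow_def by simp
  have z2: "zpow f g (a+1) = g ^^ j" using j unfolding zpow_def by (cases "j = 0") auto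
  show ?thesis unfolding z1 z2 by (simp add: fg)
qed

lemma zsuc2: "zpow f g (a + 1) x = zpow f g a (f x)"
proof (cases "0 \<le> a")
  case True
  then have "nat (a+1) = Suc (nat a)" by simp
  then show ?thesis using True by (simp add: zpow_def funpow_Suc_right del: funpow.simps)
next
  case False
  define j where "j = nat (- a - 1)"
  have j: "a = - int (Suc j)" using False by (simp add: j_def)
  have "nat (- a) = Suc j" using j by simp
  then have z1: "zpow f g a = g ^^ Suc j" using j unfolding zpow_def by simp
  have z2: "zpow f g (a+1) = g ^^ j" using j unfolding zpow_def by (cases "j = 0") auto
  show ?thesis unfolding z1 z2 by (simp add: gf funpow_Suc_right del: funpow.simps)
qed

lemma zpred1: "zpow f g (a - 1) x = g (zpow f g a x)"
  using zsuc1[of "a - 1" x] gf by (metis diff_add_cancel)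

lemma zpred2: "zpow f g (a - 1) x = zpow f g a (g x)"
  using zsuc2[of "a - 1" "g x"] fg by (metis diff_add_cancel)

lemma zadd: "zpow f g (a + b) x = zpow f g a (zpow f g b x)"
proof (induction b arbitrary: x rule: int_induct[where k=0])
  case base
  then show ?case by (simp add: zpow_def)
next
  case (step1 i)
  have "zpow f g (a + (i+1)) x = f (zpow f g (a+i) x)" using zsuc1[of "a+i"] by (simp add: add.assoc)
  also have "\<dots> = f (zpow f g a (zpow f g i x))" using step1 by simp
  also have "\<dots> = zpow f g a (f (zpow f g i x))" by (metis zsuc1 zsuc2)
  also have "\<dots> = zpow f g a (zpow f g (i+1) x)" by (simp add: zsuc1)
  finally show ?case .
next
  case (step2 i)
  have "zpow f g (a + (i-1)) x = g (zpow f g (a+i) x)" using zpred1[of "a+i"] by (simp add: diff_add_eq add_diff_eq)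
  also have "\<dots> = g (zpow f g a (zpow f g i x))" using step2 by simp
  also have "\<dots> = zpow f g a (g (zpow f g i x))" by (metis zpred1 zpred2)
  also have "\<dots> = zpow f g a (zpow f g (i-1) x)" by (simp add: zpred1)
  finally show ?case .
qed

lemma zpos: "zpow f g (int i) = f ^^ i" by (simp add: zpow_def)
lemma zneg: "zpow f g (- int i) = g ^^ i" unfolding zpow_def by (cases "i = 0") auto

lemma ginv: "(g ^^ i) ((f ^^ i) p) = p"
proof -
  have "(g ^^ i) ((f ^^ i) p) = zpow f g (- int i) (zpow f g (int i) p)" by (simp only: zpos zneg)
  also have "\<dots> = zpow f g (- int i + int i) p" by (simp only: zadd)
  also have "\<dots> = p" by (simp add: zpow_def)
  finally show ?thesis .
qed

end

lemma cont_funpow: "continuous_on UNIV (h :: 'a::topological_space \<Rightarrow> 'a) \<Longrightarrow> continuous_on UNIV (h ^^ i)"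
proof (induction i)
  case 0
  have "h ^^ 0 = (\<lambda>x. x)" by auto
  then show ?case by (simp add: continuous_on_id)
next
  case (Suc i)
  have "continuous_on UNIV (h \<circ> (h ^^ i))"
    using Suc continuous_on_compose[of UNIV "h ^^ i" h] continuous_on_subset by blast
  then show ?case by simp
qed

theorem mainTheorem3:
  fixes f g :: "'a::topological_space \<Rightarrow> 'a" and n :: int
  assumes "homeomorphism UNIV UNIV f g"
    and "cocompactly_expansive (UNIV :: int set) (\<lambda>m x. zpow f g m x)"
    and "n \<noteq> 0"
  shows "cocompactly_expansive (UNIV :: int set) (\<lambda>m x. zpow f g (n * m) x)"
proof -
  have fg: "\<And>x. f (g x) = x" and gf: "\<And>x. g (f x) = x"
    and cf: "continuous_on UNIV f" and cg: "continuous_on UNIV g"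
    using assms(1) unfolding homeomorphism_def by auto
  interpret zp f g using fg gf by unfold_locales
  obtain \<U> K where U: "finite \<U>" "\<forall>U\<in>\<U>. open U" "\<Union>\<U> = UNIV" and K: "compact K"
    and cov: "(\<Union>k\<in>UNIV. zpow f g k ` K) = UNIV"
    and exp0: "\<forall>x y. (\<forall>k\<in>UNIV. subord {zpow f g k x, zpow f g k y} (\<U> \<union> {UNIV - K})) \<longrightarrow> x = y"
    using assms(2) unfolding cocompactly_expansive_def by (elim exE conjE) (rule that)
  have exp: "\<And>x y. (\<forall>k. subord {zpow f g k x, zpow f g k y} (\<U> \<union> {UNIV - K})) \<Longrightarrow> x = y"
    using exp0 by simp
  define N where "N = nat \<bar>n\<bar>"
  have N0: "N > 0" using assms(3) by (simp add: N_def)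
  have nN: "n * sgn n = int N" using assms(3) unfolding N_def by (cases "0 < n") auto
  have zN: "\<And>q. zpow f g (n * (q * sgn n)) = zpow f g (int N * q)"
  proof -
    fix q
    have "n * (q * sgn n) = (n * sgn n) * q" by (simp only: ac_simps)
    also have "\<dots> = int N * q" by (simp only: nN)
    finally show "zpow f g (n * (q * sgn n)) = zpow f g (int N * q)" by (simp only:)
  qed
  define K' where "K' = (\<Union>i<N. (g ^^ i) ` K)"
  define W where "W = (\<lambda>h. \<Inter>i<N. (f ^^ i) -` h i)"
  define \<U>' where "\<U>' = W ` ({..<N} \<rightarrow>\<^sub>E \<U>)"
  show ?thesis unfolding cocompactly_expansive_def
  proof (intro exI conjI allI impI)
    show "finite \<U>'" unfolding \<U>'_def using U(1) by (simp add: finite_PiE)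
    show "\<forall>U\<in>\<U>'. open U"
    proof
      fix V assume "V \<in> \<U>'"
      then obtain h where h: "h \<in> {..<N} \<rightarrow>\<^sub>E \<U>" "V = W h" unfolding \<U>'_def by auto
      have op: "open ((f ^^ i) -` h i)" if "i < N" for i
      proof -
        have "h i \<in> \<U>" using h(1) that by auto
        then have "open (h i)" using U(2) by auto
        then show ?thesis
          using continuous_on_open_vimage[of UNIV "f ^^ i"] cont_funpow[OF cf, of i] by auto
      qed
      show "open V" unfolding h(2) W_def by (rule open_INT) (simp_all add: op)
    qed
    show "\<Union>\<U>' = UNIV"
    proof -
      have "p \<in> \<Union>\<U>'" for p
      proof -
        have ex: "\<exists>V. V \<in> \<U> \<and> (f ^^ i) p \<in> V" for i
        proof -
          have "(f ^^ i) p \<in> \<Union>\<U>" by (simp add: U(3))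
          then show ?thesis by (elim UnionE) (intro exI conjI)
        qed
        define c where "c = (\<lambda>i. SOME V. V \<in> \<U> \<and> (f ^^ i) p \<in> V)"
        have c: "\<And>i. c i \<in> \<U> \<and> (f ^^ i) p \<in> c i"
          unfolding c_def by (rule someI_ex[OF ex])
        define h where "h = restrict c {..<N}"
        have hP: "h \<in> {..<N} \<rightarrow>\<^sub>E \<U>" unfolding h_def using c by (simp add: restrict_PiE_iff)
        have "p \<in> W h" unfolding W_def h_def using c by simp
        moreover have "W h \<in> \<U>'" unfolding \<U>'_def using hP by (rule imageI)
        ultimately show ?thesis by (rule UnionI[rotated])
      qed
      then show ?thesis by blast
    qed
    show "compact K'" unfolding K'_def
    proof (rule compact_UN)
      fix i :: nat
      show "compact ((g ^^ i) ` K)"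
        using continuous_on_subset[OF cont_funpow[OF cg, of i], of K] K
        by (intro compact_continuous_image) auto
    qed simp
    show "(\<Union>m\<in>UNIV. zpow f g (n * m) ` K') = UNIV"
    proof safe
      fix x :: 'a
      obtain k z where z: "z \<in> K" "x = zpow f g k z" using cov by blast
      define q where "q = - ((- k) div int N)"
      define r where "r = (- k) mod int N"
      have r: "0 \<le> r" "r < int N" using N0 by (simp_all add: r_def)
      have k: "k = int N * q + (- int (nat r))" using r
      proof -
        have a: "- k = int N * ((- k) div int N) + r" using mult_div_mod_eq[of "int N" "- k"] unfolding r_def by simp
        have b: "int N * q = - (int N * ((- k) div int N))" unfolding q_def by simp
        have c: "int (nat r) = r" using r by simp
        show ?thesis unfolding c using a b by linarith
      qed
      have "x = zpow f g (int N * q + - int (nat r)) z" using z(2) k by (simp only:)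
      also have "\<dots> = zpow f g (int N * q) (zpow f g (- int (nat r)) z)" by (rule zadd)
      also have "\<dots> = zpow f g (int N * q) ((g ^^ nat r) z)" by (simp only: zneg)
      finally have "x = zpow f g (int N * q) ((g ^^ nat r) z)" .
      moreover have "(g ^^ nat r) z \<in> K'" unfolding K'_def using z r by auto
      ultimately have "x \<in> zpow f g (n * (q * sgn n)) ` K'" unfolding zN by (rule image_eqI)
      then show "x \<in> (\<Union>m\<in>UNIV. zpow f g (n * m) ` K')" by blast
    qed simp
    fix x y
    assume H: "\<forall>m\<in>UNIV. subord {zpow f g (n * m) x, zpow f g (n * m) y} (\<U>' \<union> {UNIV - K'})"
    show "x = y"
    proof (rule exp, rule allI)
      fix k
      define q where "q = k div int N"
      define r where "r = nat (k mod int N)"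
      have r: "r < N" unfolding r_def using N0 by (simp add: nat_less_iff)
      have k: "k = int r + int N * q" using N0 by (simp add: q_def r_def)
      define p1 where "p1 = zpow f g (int N * q) x"
      define p2 where "p2 = zpow f g (int N * q) y"
      have e1: "zpow f g k x = (f ^^ r) p1" unfolding p1_def by (subst k) (simp only: zadd zpos)
      have e2: "zpow f g k y = (f ^^ r) p2" unfolding p2_def by (subst k) (simp only: zadd zpos)
      have "subord {p1, p2} (\<U>' \<union> {UNIV - K'})"
        using H[rule_format, of "q * sgn n"] zN[of q] unfolding p1_def p2_def by simp
      then obtain V where V: "V \<in> \<U>' \<union> {UNIV - K'}" "{p1, p2} \<subseteq> V" unfolding subord_def by blast
      show "subord {zpow f g k x, zpow f g k y} (\<U> \<union> {UNIV - K})"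
      proof (cases "V \<in> \<U>'")
        case True
        then obtain h where h: "h \<in> {..<N} \<rightarrow>\<^sub>E \<U>" "V = W h" unfolding \<U>'_def by auto
        have "(f ^^ r) p1 \<in> h r" "(f ^^ r) p2 \<in> h r" "h r \<in> \<U>"
          using V(2) h r unfolding W_def by auto
        then show ?thesis unfolding subord_def e1 e2 by blast
      next
        case False
        then have "V = UNIV - K'" using V(1) by auto
        then have "p1 \<notin> K'" "p2 \<notin> K'" using V(2) by auto
        have inK: "(f ^^ r) p \<notin> K" if "p \<notin> K'" for p
        proof
          assume "(f ^^ r) p \<in> K"
          then have "(g ^^ r) ((f ^^ r) p) \<in> (g ^^ r) ` K" by (rule imageI)
          then have "p \<in> K'" unfolding ginv K'_def using r by blast
          then show False using that by simp
        qed
        have "(f ^^ r) p1 \<notin> K" "(f ^^ r) p2 \<notin> K" using inK \<open>p1 \<notin> K'\<close> \<open>p2 \<notin> K'\<close> by auto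
        then show ?thesis unfolding subord_def e1 e2 by blast
      qed
    qed
  qed
qed

end
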